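(* Let $\alpha\ge0$. There is a constant $C>0$ such that for all sufficiently large $k\in\mathbb N$, $$\int_{-\infty}^\infty h_k^2(x)(1+|x|)^\alpha dx\ge Ck^{\alpha/2}\quad\text{and}\quad\int_{-\infty}^\infty h_k^2(x)(1+|x|)^{-\alpha}dx\ge C\max\{k^{-\alpha/2},k^{-1/2}\}.$$
   Context: $h_k(t)=(2^kk!\sqrt\pi)^{-1/2}H_k(t)e^{-t^2/2}$ are the Hermite functions, where $H_k(t)=(-1)^ke^{t^2}\frac{d^k}{dt^k}e^{-t^2}$ are the Hermite polynomials. *)

theory Defs
  imports "HOL-Analysis.Analysis"
begin

definition hermite_poly :: "nat \<Rightarrow> real \<Rightarrow> real" where
  "hermite_poly k t = (-1) ^ k * exp (t\<^sup>2) * ((deriv ^^ k) (\<lambda>s. exp (- s\<^sup>2)) t)"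

definition hermite_fun :: "nat \<Rightarrow> real \<Rightarrow> real" where
  "hermite_fun k t = (2 ^ k * fact k * sqrt pi) powr (-1/2) * hermite_poly k t * exp (- t\<^sup>2 / 2)"

end

theory Submission
  imports Defs "HOL-Probability.Distributions" "HOL-Computational_Algebra.Polynomial"
begin


fun Hp :: "nat \<Rightarrow> real poly" where
  "Hp 0 = 1"
| "Hp (Suc k) = [:0,2:] * Hp k - pderiv (Hp k)"

declare Hp.simps(2)[simp del]

lemma deriv_gauss_iter:
  "(deriv ^^ k) (\<lambda>s. exp (- s\<^sup>2)) = (\<lambda>t. (-1)^k * poly (Hp k) t * exp (- t\<^sup>2))"
proof (induction k)
  case 0
  then show ?case by simp
next
  case (Suc k)
  have d: "deriv (\<lambda>t. (-1)^k * poly (Hp k) t * exp (- t\<^sup>2)) t = (-1)^Suc k * poly (Hp (Suc k)) t * exp (- t\<^sup>2)" for t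
  proof (rule DERIV_imp_deriv)
    show "((\<lambda>t. (-1)^k * poly (Hp k) t * exp (- t\<^sup>2)) has_field_derivative (-1)^Suc k * poly (Hp (Suc k)) t * exp (- t\<^sup>2)) (at t)"
      apply (rule derivative_eq_intros poly_DERIV refl)+
      apply (simp add: Hp.simps(2)[of k] algebra_simps power2_eq_square)
      done
  qed
  have "(deriv ^^ Suc k) (\<lambda>s. exp (- s\<^sup>2)) = deriv (\<lambda>t. (-1)^k * poly (Hp k) t * exp (- t\<^sup>2))"
    by (simp only: funpow.simps(2) o_def Suc.IH)
  also have "\<dots> = (\<lambda>t. (-1)^Suc k * poly (Hp (Suc k)) t * exp (- t\<^sup>2))"
    by (rule ext) (rule d)
  finally show ?case .
qed

lemma hermite_poly_eq: "hermite_poly k t = poly (Hp k) t"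
proof -
  have s: "(-1::real)^k * (-1)^k = 1" by (simp add: power_mult_distrib[symmetric])
  have e: "exp (t\<^sup>2) * exp (- t\<^sup>2) = 1" by (simp add: exp_minus)
  have "(-1::real)^k * exp (t\<^sup>2) * ((-1) ^ k * poly (Hp k) t * exp (- t\<^sup>2)) = ((-1::real)^k * (-1)^k) * (exp (t\<^sup>2) * exp (- t\<^sup>2)) * poly (Hp k) t"
    by (simp only: ac_simps)
  then show ?thesis unfolding hermite_poly_def deriv_gauss_iter using s e by simp
qed

lemma pderiv_Hp: "pderiv (Hp (Suc k)) = smult (2 * (real k + 1)) (Hp k)"
proof (induction k)
  case 0
  then show ?case by (simp add: pderiv_pCons Hp.simps)
next
  case (Suc k)
  have "pderiv (Hp (Suc (Suc k))) = pderiv ([:0,2:] * Hp (Suc k)) - pderiv (pderiv (Hp (Suc k)))"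
    by (simp add: pderiv_diff Hp.simps(2)[of "Suc k"])
  also have "\<dots> = smult 2 (Hp (Suc k)) + [:0,2:] * pderiv (Hp (Suc k)) - pderiv (pderiv (Hp (Suc k)))"
    by (simp add: pderiv_mult pderiv_pCons pderiv_smult algebra_simps)
  also have "\<dots> = smult 2 (Hp (Suc k)) + smult (2 * (real k + 1)) ([:0,2:] * Hp k - pderiv (Hp k))"
    unfolding Suc by (simp add: pderiv_smult algebra_simps smult_diff_right)
  also have "\<dots> = smult 2 (Hp (Suc k)) + smult (2 * (real k + 1)) (Hp (Suc k))"
    by (simp only: Hp.simps(2)[of k, symmetric])
  also have "\<dots> = smult (2 * (real (Suc k) + 1)) (Hp (Suc k))"
    by (simp only: smult_add_left[symmetric]) (simp add: algebra_simps)
  finally show ?case .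
qed

lemma Hp_rec: "Hp (Suc (Suc k)) = [:0,2:] * Hp (Suc k) - smult (2 * (real k + 1)) (Hp k)"
  by (simp only: Hp.simps(2)[of "Suc k"] pderiv_Hp)

lemma Hp_ode: "pderiv (pderiv (Hp k)) = [:0,2:] * pderiv (Hp k) - smult (2 * real k) (Hp k)"
proof -
  have "smult (2 * (real k + 1)) (Hp k) = pderiv (Hp (Suc k))" by (simp add: pderiv_Hp)
  also have "\<dots> = smult 2 (Hp k) + [:0,2:] * pderiv (Hp k) - pderiv (pderiv (Hp k))"
    by (simp add: pderiv_diff pderiv_mult pderiv_pCons pderiv_smult algebra_simps Hp.simps(2)[of k])
  finally show ?thesis by (simp add: algebra_simps smult_add_left)
qed

lemma higher_pderiv_smult: "(pderiv ^^ m) (smult c p) = smult c ((pderiv ^^ m) p)"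
  by (induction m) (simp_all add: pderiv_smult)

lemma higher_pderiv_Hp: "(pderiv ^^ m) (Hp m) = [: 2 ^ m * fact m :]"
proof (induction m)
  case 0
  then show ?case by simp
next
  case (Suc m)
  have "(pderiv ^^ Suc m) (Hp (Suc m)) = (pderiv ^^ m) (pderiv (Hp (Suc m)))"
    by (simp only: funpow_Suc_right o_def)
  also have "\<dots> = smult (2 * (real m + 1)) [: 2 ^ m * fact m :]"
    by (simp add: pderiv_Hp higher_pderiv_smult Suc)
  finally show ?case by (simp add: algebra_simps)
qed

lemma higher_pderiv_Hp_zero: "n < m \<Longrightarrow> (pderiv ^^ m) (Hp n) = 0"
proof -
  assume "n < m"
  then obtain r where m: "m = Suc r + n" by (auto dest!: less_imp_Suc_add)
  have "(pderiv ^^ m) (Hp n) = (pderiv ^^ Suc r) ((pderiv ^^ n) (Hp n))"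
    by (simp only: m funpow_add o_def)
  also have "\<dots> = (pderiv ^^ r) (pderiv [: 2 ^ n * fact n :])"
    by (simp only: higher_pderiv_Hp funpow_Suc_right o_def)
  also have "\<dots> = 0" by (induction r) (simp_all add: pderiv_pCons)
  finally show ?thesis .
qed


definition mom :: "nat \<Rightarrow> real" where
  "mom n = (LINT x|lborel. exp (- x\<^sup>2) * x ^ n)"

lemma mom_even_hb: "has_bochner_integral lborel (\<lambda>x::real. exp (- x\<^sup>2) * x ^ (2 * k)) (sqrt pi * (fact (2 * k) / (2 ^ (2 * k) * fact k)))"
  using has_bochner_integral_even_function[OF gaussian_moment_even_pos[where k=k]] by simp

lemma mom_odd_hb: "has_bochner_integral lborel (\<lambda>x::real. exp (- x\<^sup>2) * x ^ (2 * k + 1)) 0"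
  by (rule has_bochner_integral_odd_function[OF gaussian_moment_odd_pos[of k]]) simp

lemma integrable_mom: "integrable lborel (\<lambda>x::real. exp (- x\<^sup>2) * x ^ n)"
proof (cases "even n")
  case True
  then obtain k where "n = 2 * k" by (auto elim: evenE)
  then show ?thesis using integrable.intros[OF mom_even_hb[of k]] by simp
next
  case False
  then obtain k where "n = 2 * k + 1" by (auto elim: oddE)
  then show ?thesis using integrable.intros[OF mom_odd_hb[of k]] by simp
qed

lemma mom_even: "mom (2 * k) = sqrt pi * (fact (2 * k) / (2 ^ (2 * k) * fact k))"
  unfolding mom_def using mom_even_hb by (rule has_bochner_integral_integral_eq)

lemma mom_odd: "mom (2 * k + 1) = 0"
  unfolding mom_def using mom_odd_hb by (rule has_bochner_integral_integral_eq)

lemma mom_rec: "2 * mom (n + 2) = (real n + 1) * mom n"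
proof (cases "even n")
  case True
  then obtain k where n: "n = 2 * k" by (auto elim: evenE)
  have n2: "n + 2 = 2 * Suc k" using n by simp
  define F where "F = (fact (2*k) :: real)"
  define G where "G = (fact k :: real)"
  define P where "P = (2::real) ^ (2 * k)"
  define K where "K = real k + 1"
  have pos: "F > 0" "G > 0" "P > 0" "K > 0" unfolding F_def G_def P_def K_def by auto
  have f1: "fact (2 * Suc k) = 2*K*(2*K-1)*F"
    unfolding F_def K_def by (simp add: algebra_simps)
  have f2: "fact (Suc k) = K*G" unfolding G_def K_def by (simp add: algebra_simps)
  have f3: "(2::real) ^ (2 * Suc k) = 4 * P" unfolding P_def by simp
  have "2 * (sqrt pi * (2*K*(2*K-1)*F / (4 * P * (K*G))))
     = (2*K-1) * (sqrt pi * (F / (P * G)))"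
    using pos by (simp add: field_simps)
  moreover have "real (2*k) + 1 = 2*K-1" unfolding K_def by simp
  ultimately show ?thesis unfolding n2 mom_even unfolding n mom_even f1 f2 f3
    by (simp add: F_def G_def P_def)
next
  case False
  then obtain k where n: "n = 2 * k + 1" by (auto elim: oddE)
  have n2: "n + 2 = 2 * Suc k + 1" using n by simp
  show ?thesis unfolding n2 mom_odd unfolding n mom_odd by simp
qed

definition gI :: "real poly \<Rightarrow> real" where
  "gI p = (LINT x|lborel. poly p x * exp (- x\<^sup>2))"

lemma integrable_gpoly: "integrable lborel (\<lambda>x::real. poly p x * exp (- x\<^sup>2))"
proof -
  have "(\<lambda>x. poly p x * exp (- x\<^sup>2)) = (\<lambda>x. \<Sum>i\<le>degree p. coeff p i * (exp (- x\<^sup>2) * x ^ i))"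
    by (simp add: poly_altdef sum_distrib_right sum_distrib_left fun_eq_iff mult_ac)
  moreover have "integrable lborel (\<lambda>x::real. \<Sum>i\<le>degree p. coeff p i * (exp (- x\<^sup>2) * x ^ i))"
    using integrable_mom by simp
  ultimately show ?thesis by simp
qed

lemma gI_add: "gI (p + q) = gI p + gI q"
  unfolding gI_def by (simp add: distrib_right integrable_gpoly)

lemma gI_diff: "gI (p - q) = gI p - gI q"
  unfolding gI_def by (simp add: left_diff_distrib integrable_gpoly)

lemma gI_smult: "gI (smult c p) = c * gI p"
  unfolding gI_def by (simp add: mult.assoc)

lemma gI_zero: "gI 0 = 0"
  unfolding gI_def by simp

lemma gI_sum: "gI (\<Sum>i\<in>A. f i) = (\<Sum>i\<in>A. gI (f i))"
  unfolding gI_def by (simp add: poly_sum sum_distrib_right integrable_gpoly)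

lemma gI_one: "gI 1 = sqrt pi"
  using mom_even[of 0] unfolding gI_def mom_def by simp

lemma gI_monom: "gI (monom c n) = c * mom n"
  unfolding gI_def mom_def by (simp add: poly_monom mult_ac)

lemma pderiv_sum': "pderiv (\<Sum>i\<in>A. f i) = (\<Sum>i\<in>A. pderiv (f i))"
  using higher_pderiv_sum[of 1 f A] by simp

lemma gI_ibp_monom: "gI (pderiv (monom c n)) = gI ([:0,2:] * monom c n)"
proof -
  have "[:0,2:] * monom c n = monom (2 * c) (Suc n)"
    by (simp add: monom_Suc smult_monom)
  hence r: "gI ([:0,2:] * monom c n) = 2 * c * mom (Suc n)" by (simp add: gI_monom)
  show ?thesis
  proof (cases n)
    case 0
    then show ?thesis using r mom_odd[of 0] by (simp add: pderiv_monom gI_zero)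
  next
    case (Suc j)
    have "2 * mom (j + 2) = (real j + 1) * mom j" by (rule mom_rec)
    then show ?thesis using r Suc by (simp add: pderiv_monom gI_monom algebra_simps)
  qed
qed

lemma gI_ibp: "gI (pderiv p) = gI ([:0,2:] * p)"
proof -
  have "gI (pderiv p) = gI (pderiv (\<Sum>i\<le>degree p. monom (coeff p i) i))"
    by (simp add: poly_as_sum_of_monoms)
  also have "\<dots> = (\<Sum>i\<le>degree p. gI ([:0,2:] * monom (coeff p i) i))"
    by (simp add: pderiv_sum' gI_sum gI_ibp_monom)
  also have "\<dots> = gI ([:0,2:] * (\<Sum>i\<le>degree p. monom (coeff p i) i))"
    by (simp add: gI_sum sum_distrib_left)
  also have "\<dots> = gI ([:0,2:] * p)" by (simp add: poly_as_sum_of_monoms)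
  finally show ?thesis .
qed

lemma gI_Hp_step: "gI (Hp (Suc k) * q) = gI (Hp k * pderiv q)"
proof -
  have "gI (Hp (Suc k) * q) = gI ([:0,2:] * (Hp k * q)) - gI (pderiv (Hp k) * q)"
    by (simp add: Hp.simps(2) algebra_simps gI_diff del: mult_pCons_left)
  also have "gI ([:0,2:] * (Hp k * q)) = gI (pderiv (Hp k * q))"
    by (rule gI_ibp[symmetric])
  also have "\<dots> = gI (pderiv (Hp k) * q) + gI (Hp k * pderiv q)"
    by (simp add: pderiv_mult gI_add algebra_simps)
  finally show ?thesis by simp
qed

lemma gI_Hp: "gI (Hp k * q) = gI ((pderiv ^^ k) q)"
proof (induction k arbitrary: q)
  case 0
  then show ?case by simp
next
  case (Suc k)
  show ?case by (simp only: gI_Hp_step Suc.IH funpow_Suc_right o_def)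
qed

lemma gI_Hp_sq: "gI (Hp k * Hp k) = 2 ^ k * fact k * sqrt pi"
  by (simp add: gI_Hp higher_pderiv_Hp gI_one[symmetric] gI_smult[symmetric])

lemma gI_Hp_orth: "m \<noteq> n \<Longrightarrow> gI (Hp m * Hp n) = 0"
proof (cases "n < m")
  case True
  then show ?thesis by (simp add: gI_Hp higher_pderiv_Hp_zero gI_zero)
next
  case False
  assume "m \<noteq> n"
  with False have "m < n" by simp
  then show ?thesis by (simp add: mult.commute[of "Hp m"] gI_Hp higher_pderiv_Hp_zero gI_zero)
qed


definition Nn :: "nat \<Rightarrow> real" where "Nn k = 2 ^ k * fact k * sqrt pi"

lemma Nn_pos: "Nn k > 0" unfolding Nn_def by simp

lemma hf_eq: "hermite_fun k t = Nn k powr (-1/2) * poly (Hp k) t * exp (- t\<^sup>2 / 2)"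
  unfolding hermite_fun_def hermite_poly_eq Nn_def ..

lemma hf_sq: "(hermite_fun k t)\<^sup>2 = poly (Hp k * Hp k) t * exp (- t\<^sup>2) / Nn k"
proof -
  have c: "(Nn k powr (-1/2))\<^sup>2 = 1 / Nn k"
    using Nn_pos[of k] by (simp add: powr_minus_divide powr_half_sqrt power_divide)
  have e: "(exp (- t\<^sup>2 / 2))\<^sup>2 = exp (- t\<^sup>2)"
    by (simp add: power2_eq_square exp_add[symmetric])
  show ?thesis unfolding hf_eq power_mult_distrib c e by (simp add: power2_eq_square)
qed

lemma hf_int: "integrable lborel (\<lambda>x. (hermite_fun k x)\<^sup>2 * poly q x)"
  "(LINT x|lborel. (hermite_fun k x)\<^sup>2 * poly q x) = gI (Hp k * Hp k * q) / Nn k"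
proof -
  have eq: "(\<lambda>x. (hermite_fun k x)\<^sup>2 * poly q x) = (\<lambda>x. poly (Hp k * Hp k * q) x * exp (- x\<^sup>2) / Nn k)"
    by (simp add: hf_sq fun_eq_iff)
  show "integrable lborel (\<lambda>x. (hermite_fun k x)\<^sup>2 * poly q x)"
    unfolding eq by (rule integrable_divide_zero[OF integrable_gpoly])
  show "(LINT x|lborel. (hermite_fun k x)\<^sup>2 * poly q x) = gI (Hp k * Hp k * q) / Nn k"
    unfolding eq gI_def by simp
qed

lemma gI_pair: "gI (Hp m * Hp n) = (if m = n then Nn n else 0)"
  using gI_Hp_sq gI_Hp_orth unfolding Nn_def by auto

lemma xH: "[:0,1:] * Hp (Suc i) = smult (1/2) (Hp (Suc (Suc i))) + smult (real i + 1) (Hp i)"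
  unfolding Hp_rec by (simp add: algebra_simps smult_diff_right smult_add_right)

lemma x2H: "[:0,0,1:] * Hp (Suc (Suc j)) = smult (1/4) (Hp (j+4)) + smult (real j + 5/2) (Hp (j+2)) + smult ((real j + 2) * (real j + 1)) (Hp j)"
proof -
  have "[:0,0,1:] * Hp (Suc (Suc j)) = [:0,1:] * ([:0,1:] * Hp (Suc (Suc j)))"
    by (simp add: algebra_simps)
  also have "\<dots> = smult (1/2) ([:0,1:] * Hp (Suc (Suc (Suc j)))) + smult (real j + 1 + 1) ([:0,1:] * Hp (Suc j))"
    by (simp only: xH[of "Suc j"] distrib_left mult_smult_right of_nat_Suc add.commute)
  also have "\<dots> = smult (1/4) (Hp (j+4)) + smult (real j + 5/2) (Hp (j+2)) + smult ((real j + 2) * (real j + 1)) (Hp j)"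
    by (simp only: xH, rule poly_eq_poly_eq_iff[THEN iffD1]) (simp add: fun_eq_iff field_simps eval_nat_numeral)
  finally show ?thesis by (simp add: eval_nat_numeral)
qed


lemma hf_mom: "integrable lborel (\<lambda>x. (hermite_fun k x)\<^sup>2 * x ^ n)"
  "(LINT x|lborel. (hermite_fun k x)\<^sup>2 * x ^ n) = gI (Hp k * Hp k * monom 1 n) / Nn k"
  using hf_int[of k "monom 1 n"] by (simp_all add: poly_monom)

lemma Nn_Suc: "Nn (Suc n) = 2 * (real n + 1) * Nn n"
  unfolding Nn_def by (simp add: algebra_simps)

lemma monom2: "monom (1::real) 2 = [:0,0,1:]"
  by (simp add: monom_altdef eval_nat_numeral)

lemma hf_M0: "(LINT x|lborel. (hermite_fun k x)\<^sup>2) = 1"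
  using hf_mom(2)[of k 0] Nn_pos[of k] by (simp add: gI_pair)

lemma hf_M2: "(LINT x|lborel. (hermite_fun (Suc (Suc j)) x)\<^sup>2 * x ^ 2) = real (Suc (Suc j)) + 1/2"
proof -
  let ?k = "Suc (Suc j)"
  have "gI (Hp ?k * Hp ?k * monom 1 2) = gI (Hp ?k * ([:0,0,1:] * Hp ?k))"
    by (simp add: monom2 mult_ac)
  also have "\<dots> = (real j + 5/2) * Nn ?k"
    unfolding x2H by (simp add: distrib_left gI_add gI_smult gI_pair)
  finally show ?thesis using hf_mom(2)[of ?k 2] Nn_pos[of ?k] by simp
qed

lemma hf_M4: "(LINT x|lborel. (hermite_fun (Suc (Suc j)) x)\<^sup>2 * x ^ 4) = (6 * (real j + 2)^2 + 6 * (real j + 2) + 3) / 4"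
proof -
  let ?k = "Suc (Suc j)"
  define A where "A = [:0,0,1:] * Hp ?k"
  have m4: "monom (1::real) 4 = [:0,0,1:] * [:0,0,1:]"
    by (simp add: monom2[symmetric] mult_monom)
  have "gI (Hp ?k * Hp ?k * monom 1 4) = gI (A * A)"
    unfolding A_def m4 by (simp add: mult_ac)
  also have "\<dots> = (1/4)^2 * Nn (j+4) + (real j + 5/2)^2 * Nn (j+2) + ((real j + 2) * (real j + 1))^2 * Nn j"
    unfolding A_def x2H
    by (simp only: distrib_left distrib_right mult_smult_left mult_smult_right gI_add gI_smult gI_pair) (simp add: power2_eq_square algebra_simps)
  finally have g: "gI (Hp ?k * Hp ?k * monom 1 4) = (1/4)^2 * Nn (j+4) + (real j + 5/2)^2 * Nn (j+2) + ((real j + 2) * (real j + 1))^2 * Nn j" .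
  define N where "N = Nn j"
  have N: "N > 0" unfolding N_def by (rule Nn_pos)
  have n2: "Nn (j+2) = 4 * (real j + 2) * (real j + 1) * N"
    unfolding N_def by (simp add: Nn_Suc eval_nat_numeral algebra_simps)
  have n4: "Nn (j+4) = 16 * (real j + 4) * (real j + 3) * (real j + 2) * (real j + 1) * N"
    unfolding N_def by (simp add: Nn_Suc eval_nat_numeral algebra_simps)
  have "(LINT x|lborel. (hermite_fun ?k x)\<^sup>2 * x ^ 4) = gI (Hp ?k * Hp ?k * monom 1 4) / Nn (j+2)"
    using hf_mom(2)[of ?k 4] by simp
  also have "gI (Hp ?k * Hp ?k * monom 1 4) = (6 * (real j + 2)^2 + 6 * (real j + 2) + 3) / 4 * Nn (j+2)"
    unfolding g n2 n4 N_def[symmetric] by (simp add: algebra_simps power2_eq_square)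
  also have "\<dots> / Nn (j+2) = (6 * (real j + 2)^2 + 6 * (real j + 2) + 3) / 4"
    using Nn_pos[of "j+2"] by simp
  finally show ?thesis .
qed



definition hdr :: "nat \<Rightarrow> real \<Rightarrow> real" where
  "hdr k t = Nn k powr (-1/2) * poly (pderiv (Hp k) - [:0,1:] * Hp k) t * exp (- t\<^sup>2 / 2)"

lemma gd: "((\<lambda>t. poly p t * exp (- t\<^sup>2 / 2)) has_real_derivative poly (pderiv p - [:0,1:] * p) t * exp (- t\<^sup>2 / 2)) (at t)"
  by (auto intro!: derivative_eq_intros poly_DERIV simp: algebra_simps power2_eq_square)

lemma hf_deriv: "(hermite_fun k has_real_derivative hdr k t) (at t)"
proof -
  have eq: "hermite_fun k = (\<lambda>t. Nn k powr (-1/2) * (poly (Hp k) t * exp (- t\<^sup>2 / 2)))"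
    by (simp only: fun_eq_iff hf_eq mult.assoc) simp
  show ?thesis unfolding eq hdr_def mult.assoc by (rule DERIV_cmult[OF gd])
qed

lemma poly_id: "poly (pderiv (pderiv (Hp k) - [:0,1:] * Hp k) - [:0,1:] * (pderiv (Hp k) - [:0,1:] * Hp k)) t
   = (t\<^sup>2 - (2 * real k + 1)) * poly (Hp k) t"
proof -
  have o: "poly (pderiv (pderiv (Hp k))) t = 2 * t * poly (pderiv (Hp k)) t - 2 * real k * poly (Hp k) t"
    by (simp add: Hp_ode)
  show ?thesis by (simp add: pderiv_diff pderiv_mult pderiv_pCons o algebra_simps power2_eq_square)
qed

lemma hd_deriv: "(hdr k has_real_derivative (t\<^sup>2 - (2 * real k + 1)) * hermite_fun k t) (at t)"
proof -
  have "hdr k = (\<lambda>t. Nn k powr (-1/2) * (poly (pderiv (Hp k) - [:0,1:] * Hp k) t * exp (- t\<^sup>2 / 2)))"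
    by (simp add: fun_eq_iff hdr_def mult_ac)
  then show ?thesis using DERIV_cmult[OF gd, of "Nn k powr (-1/2)" "pderiv (Hp k) - [:0,1:] * Hp k" t]
    unfolding poly_id hf_eq by (simp add: mult_ac)
qed

definition En :: "nat \<Rightarrow> real \<Rightarrow> real" where
  "En k t = (hdr k t)\<^sup>2 + (2 * real k + 1 - t\<^sup>2) * (hermite_fun k t)\<^sup>2"

lemma En_deriv: "(En k has_real_derivative (- (2 * t * (hermite_fun k t)\<^sup>2))) (at t)"
proof -
  have "((\<lambda>t. (hdr k t)\<^sup>2 + (2 * real k + 1 - t\<^sup>2) * (hermite_fun k t)\<^sup>2) has_real_derivative
     (2 * hdr k t * ((t\<^sup>2 - (2 * real k + 1)) * hermite_fun k t) + ((- (2 * t)) * (hermite_fun k t)\<^sup>2 + (2 * real k + 1 - t\<^sup>2) * (2 * hermite_fun k t * hdr k t)))) (at t)"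
    by (auto intro!: derivative_eq_intros hf_deriv hd_deriv simp: power2_eq_square)
  then show ?thesis unfolding En_def[abs_def] by (simp add: algebra_simps power2_eq_square)
qed

lemma En_le: "En k t \<le> En k 0"
proof (cases "t \<ge> 0")
  case True
  show ?thesis
  proof (rule DERIV_nonpos_imp_nonincreasing[OF True])
    fix x :: real assume "0 \<le> x" "x \<le> t"
    then show "\<exists>y. DERIV (En k) x :> y \<and> y \<le> 0"
      by (intro exI[of _ "- (2 * x * (hermite_fun k x)\<^sup>2)"]) (auto simp: En_deriv)
  qed
next
  case False
  show ?thesis
  proof (rule DERIV_nonneg_imp_nondecreasing[of t 0 "En k"])
    show "t \<le> 0" using False by simp
    fix x :: real assume "t \<le> x" "x \<le> 0"
    then show "\<exists>y. DERIV (En k) x :> y \<and> y \<ge> 0"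
      by (intro exI[of _ "- (2 * x * (hermite_fun k x)\<^sup>2)"]) (auto simp: En_deriv mult_nonpos_nonneg)
  qed
qed

lemma hf_cont: "continuous_on S (hermite_fun k)"
  using hf_deriv DERIV_isCont continuous_at_imp_continuous_on by blast

lemma hd_cont: "continuous_on S (hdr k)"
  using hd_deriv DERIV_isCont continuous_at_imp_continuous_on by blast

lemma hf_meas[measurable]: "hermite_fun k \<in> borel_measurable borel"
  using hf_cont borel_measurable_continuous_onI by blast


lemma hf_M0': "(LINT x|lborel. (hermite_fun k x)\<^sup>2) = 1" by (rule hf_M0)

lemma hf_int0: "integrable lborel (\<lambda>x. (hermite_fun k x)\<^sup>2)"
  using hf_mom(1)[of k 0] by simp

lemma E0_lower:
  assumes k: "k \<ge> 2"
  shows "(2 * real k + 1) / (8 * sqrt (2 * (2 * real k + 1))) \<le> En k 0"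
proof -
  obtain j where kj: "k = Suc (Suc j)" using k by (metis add_2_eq_Suc le_Suc_ex)
  define w where "w = 2 * real k + 1"
  define L where "L = sqrt (2 * w)"
  have w: "w > 0" unfolding w_def by simp
  have L: "L > 0" "L\<^sup>2 = 2 * w" unfolding L_def using w by auto
  define S where "S = {-L..L}"
  let ?h = "hermite_fun k"
  define f where "f = (\<lambda>x. indicator S x *\<^sub>R ((w - x\<^sup>2) * (?h x)\<^sup>2))"
  define g where "g = (\<lambda>x. w * (?h x)\<^sup>2 - (1 + w / L\<^sup>2) * ((?h x)\<^sup>2 * x ^ 2))"
  define e where "e = (\<lambda>x::real. indicator S x *\<^sub>R En k 0)"
  have intf: "integrable lborel f" unfolding f_def S_def
    by (rule borel_integrable_compact) (auto intro!: continuous_intros hf_cont)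
  have inte: "integrable lborel e" unfolding e_def S_def
    by (rule borel_integrable_compact) (auto intro!: continuous_intros)
  have intg: "integrable lborel g" unfolding g_def
    using hf_int0[of k] hf_mom(1)[of k 2] by simp
  have "integral\<^sup>L lborel g = w * 1 - (1 + w / L\<^sup>2) * (real (Suc (Suc j)) + 1/2)"
    unfolding g_def using hf_int0[of k] hf_mom(1)[of k 2] hf_M0[of k] hf_M2[of j] kj
    by simp
  also have "\<dots> = w / 4" using L w unfolding w_def kj by (simp add: field_simps)
  finally have Ig: "integral\<^sup>L lborel g = w / 4" .
  have Ie: "integral\<^sup>L lborel e = 2 * L * En k 0"
    unfolding e_def S_def using L by simp
  have "integral\<^sup>L lborel g \<le> integral\<^sup>L lborel f"
  proof (rule integral_mono[OF intg intf])
    fix x :: real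
    have H: "(?h x)\<^sup>2 \<ge> 0" by simp
    show "g x \<le> f x"
    proof (cases "x \<in> S")
      case True
      have "0 \<le> (w / L\<^sup>2) * ((?h x)\<^sup>2 * x ^ 2)" using w L H by simp
      then show ?thesis using True unfolding f_def g_def by (simp add: algebra_simps)
    next
      case False
      then have "\<bar>x\<bar> > L" unfolding S_def by auto
      then have "L\<^sup>2 < \<bar>x\<bar>\<^sup>2" using L(1) by (intro power_strict_mono) auto
      then have "x\<^sup>2 > L\<^sup>2" by simp
      then have "x\<^sup>2 / L\<^sup>2 \<ge> 1" using L w by (simp add: field_simps)
      then have P: "(w / L\<^sup>2) * ((?h x)\<^sup>2 * x ^ 2) \<ge> w * (?h x)\<^sup>2"
        using w H mult_left_mono[of 1 "x\<^sup>2 / L\<^sup>2" "w * (?h x)\<^sup>2"] by (simp add: algebra_simps)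
      have Q: "(?h x)\<^sup>2 * x ^ 2 \<ge> 0" by simp
      have G: "g x = w * (?h x)\<^sup>2 - (?h x)\<^sup>2 * x ^ 2 - (w / L\<^sup>2) * ((?h x)\<^sup>2 * x ^ 2)"
        unfolding g_def by (simp add: algebra_simps)
      have "f x = 0" using False unfolding f_def by simp
      then show ?thesis using G P Q by linarith
    qed
  qed
  also have "integral\<^sup>L lborel f \<le> integral\<^sup>L lborel e"
  proof (rule integral_mono[OF intf inte])
    fix x :: real
    have "(w - x\<^sup>2) * (?h x)\<^sup>2 \<le> En k x" unfolding En_def w_def by simp
    also have "\<dots> \<le> En k 0" by (rule En_le)
    finally show "f x \<le> e x" unfolding f_def e_def by (simp add: indicator_def)
  qed
  finally have "w / 4 \<le> 2 * L * En k 0" using Ig Ie by simp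
  then show ?thesis using L unfolding w_def[symmetric] L_def[symmetric] by (simp add: field_simps)
qed



lemma vd: "(f has_real_derivative D) (at t) \<Longrightarrow> (f has_vector_derivative D) (at t within S)"
  using has_real_derivative_iff_has_vector_derivative has_vector_derivative_at_within by blast

lemma local_lower:
  assumes k: "k \<ge> 2"
  shows "En k 0 / (4 * (2 * real k + 2)) \<le> integral {0..1} (\<lambda>t. (hermite_fun k t)\<^sup>2)"
proof -
  let ?h = "hermite_fun k"
  let ?g = "hdr k"
  define w where "w = 2 * real k + 1"
  define A where "A = integral {0..1} (\<lambda>t. (?h t)\<^sup>2)"
  have w4: "w - 1 \<ge> 4" using k unfolding w_def by simp
  have ch: "continuous_on {0..1} ?h" by (rule hf_cont)
  have cg: "continuous_on {0..1} ?g" by (rule hd_cont)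
  have intA: "(\<lambda>t. (?h t)\<^sup>2) integrable_on {0..1}"
    by (rule integrable_continuous_interval) (intro continuous_intros ch)
  have intE: "En k integrable_on {0..1}" unfolding En_def[abs_def]
    by (rule integrable_continuous_interval) (intro continuous_intros ch cg)
  have intF: "(\<lambda>t. (?g t)\<^sup>2 + (t\<^sup>2 - w) * (?h t)\<^sup>2) integrable_on {0..1}"
    by (rule integrable_continuous_interval) (intro continuous_intros ch cg)
  have intJ: "(\<lambda>t. (w - t\<^sup>2) * (?h t)\<^sup>2) integrable_on {0..1}"
    by (rule integrable_continuous_interval) (intro continuous_intros ch)
  have intC: "(\<lambda>t. 2 * t * (?h t)\<^sup>2) integrable_on {0..1}"
    by (rule integrable_continuous_interval) (intro continuous_intros ch)
  have dhg: "((\<lambda>t. ?h t * ?g t) has_real_derivative (?g t)\<^sup>2 + (t\<^sup>2 - w) * (?h t)\<^sup>2) (at t)" for t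
  proof -
    have "((\<lambda>t. ?h t * ?g t) has_real_derivative ?g t * ?g t + ((t\<^sup>2 - (2 * real k + 1)) * ?h t) * ?h t) (at t)"
      by (rule DERIV_mult[OF hf_deriv hd_deriv])
    moreover have "?g t * ?g t + ((t\<^sup>2 - (2 * real k + 1)) * ?h t) * ?h t = (?g t)\<^sup>2 + (t\<^sup>2 - w) * (?h t)\<^sup>2"
      unfolding w_def by (simp add: power2_eq_square algebra_simps)
    ultimately show ?thesis by simp
  qed
  have FTC1: "((\<lambda>t. (?g t)\<^sup>2 + (t\<^sup>2 - w) * (?h t)\<^sup>2) has_integral (?h 1 * ?g 1 - ?h 0 * ?g 0)) {0..1}"
    using fundamental_theorem_of_calculus[of 0 1 "\<lambda>t. ?h t * ?g t" "\<lambda>t. (?g t)\<^sup>2 + (t\<^sup>2 - w) * (?h t)\<^sup>2"]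
    using vd[OF dhg] by simp
  have FTC2: "((\<lambda>t. - (2 * t * (?h t)\<^sup>2)) has_integral (En k 1 - En k 0)) {0..1}"
    using fundamental_theorem_of_calculus[of 0 1 "En k" "\<lambda>t. - (2 * t * (?h t)\<^sup>2)"]
    using vd[OF En_deriv] by simp
  define B where "B = integral {0..1} (En k)"
  define J where "J = integral {0..1} (\<lambda>t. (w - t\<^sup>2) * (?h t)\<^sup>2)"
  have a: "En k 1 \<le> B"
  proof -
    have "integral {0..1} (\<lambda>_::real. En k 1) \<le> B" unfolding B_def
    proof (rule Henstock_Kurzweil_Integration.integral_le)
      show "(\<lambda>_::real. En k 1) integrable_on {0..1}" by (intro integrable_continuous_interval continuous_intros)
      show "En k integrable_on {0..1}" by (rule intE)
      fix t :: real assume t: "t \<in> {0..1}"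
      show "En k 1 \<le> En k t"
      proof (rule DERIV_nonpos_imp_nonincreasing[of t 1 "En k"])
        show "t \<le> 1" using t by simp
        fix x :: real assume "t \<le> x" "x \<le> 1"
        then have "x \<ge> 0" using t by simp
        then show "\<exists>y. DERIV (En k) x :> y \<and> y \<le> 0"
          by (intro exI[of _ "- (2 * x * (?h x)\<^sup>2)"]) (auto simp: En_deriv)
      qed
    qed
    then show ?thesis by simp
  qed
  have b: "B = (?h 1 * ?g 1 - ?h 0 * ?g 0) + 2 * J"
  proof -
    have "En k = (\<lambda>t. ((?g t)\<^sup>2 + (t\<^sup>2 - w) * (?h t)\<^sup>2) + 2 * ((w - t\<^sup>2) * (?h t)\<^sup>2))"
      unfolding En_def w_def by (simp add: fun_eq_iff algebra_simps)
    then have "B = integral {0..1} (\<lambda>t. (?g t)\<^sup>2 + (t\<^sup>2 - w) * (?h t)\<^sup>2) + integral {0..1} (\<lambda>t. 2 * ((w - t\<^sup>2) * (?h t)\<^sup>2))"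
      unfolding B_def using intF intJ by (simp add: integral_add)
    also have "\<dots> = (?h 1 * ?g 1 - ?h 0 * ?g 0) + 2 * J"
      unfolding J_def using integral_unique[OF FTC1] by simp
    finally show ?thesis .
  qed
  have c: "J \<le> w * A"
  proof -
    have "J \<le> integral {0..1} (\<lambda>t. w * (?h t)\<^sup>2)" unfolding J_def
    proof (rule Henstock_Kurzweil_Integration.integral_le[OF intJ])
      show "(\<lambda>t. w * (?h t)\<^sup>2) integrable_on {0..1}" by (rule integrable_continuous_interval) (intro continuous_intros ch)
      fix t :: real assume t: "t \<in> {0..1}"
      show "(w - t\<^sup>2) * (?h t)\<^sup>2 \<le> w * (?h t)\<^sup>2"
        by (simp add: algebra_simps)
    qed
    then show ?thesis unfolding A_def by simp
  qed
  have d: "En k 0 - En k 1 \<le> 2 * A"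
  proof -
    have "integral {0..1} (\<lambda>t. 2 * t * (?h t)\<^sup>2) \<le> integral {0..1} (\<lambda>t. 2 * (?h t)\<^sup>2)"
    proof (rule Henstock_Kurzweil_Integration.integral_le[OF intC])
      show "(\<lambda>t. 2 * (?h t)\<^sup>2) integrable_on {0..1}" by (rule integrable_continuous_interval) (intro continuous_intros ch)
      fix t :: real assume t: "t \<in> {0..1}"
      show "2 * t * (?h t)\<^sup>2 \<le> 2 * (?h t)\<^sup>2"
        using t mult_right_mono[of t 1 "(?h t)\<^sup>2"] by simp
    qed
    moreover have "integral {0..1} (\<lambda>t. 2 * t * (?h t)\<^sup>2) = En k 0 - En k 1"
      using integral_unique[OF has_integral_neg[OF FTC2]] by simp
    ultimately show ?thesis unfolding A_def by simp
  qed
  have e: "\<bar>?h t * ?g t\<bar> \<le> En k t / 4" if "w - t\<^sup>2 \<ge> 4" for t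
  proof -
    have "0 \<le> (\<bar>?g t\<bar> - 2 * \<bar>?h t\<bar>)\<^sup>2" by simp
    then have "4 * (\<bar>?h t\<bar> * \<bar>?g t\<bar>) \<le> (?g t)\<^sup>2 + 4 * (?h t)\<^sup>2"
      by (simp add: power2_eq_square algebra_simps)
    also have "\<dots> \<le> (?g t)\<^sup>2 + (w - t\<^sup>2) * (?h t)\<^sup>2"
      using that mult_right_mono[of 4 "w - t\<^sup>2" "(?h t)\<^sup>2"] by simp
    finally show ?thesis unfolding En_def w_def by (simp add: abs_mult)
  qed
  have e0: "\<bar>?h 0 * ?g 0\<bar> \<le> En k 0 / 4" using e[of 0] w4 by simp
  have e1: "\<bar>?h 1 * ?g 1\<bar> \<le> En k 0 / 4" using e[of 1] w4 En_le[of k 1] by simp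
  have "En k 0 - 2 * A \<le> En k 0 / 4 + En k 0 / 4 + 2 * w * A"
    using a b c d e0 e1 by linarith
  then have "En k 0 \<le> 4 * (2 * real k + 2) * A" unfolding w_def by (simp add: algebra_simps)
  then show ?thesis unfolding A_def[symmetric] by (simp add: field_simps)
qed



lemma int_pow: "integrable lborel (\<lambda>x. (hermite_fun k x)\<^sup>2 * (1 + \<bar>x\<bar>) powr a)"
proof -
  define n where "n = nat \<lceil>\<bar>a\<bar>\<rceil>"
  have an: "a \<le> real n" unfolding n_def by linarith
  define q :: "real poly" where "q = [:2,0,1:] ^ n"
  have pq: "poly q x = (2 + x\<^sup>2) ^ n" for x unfolding q_def by (simp add: poly_power power2_eq_square)
  show ?thesis
  proof (rule Bochner_Integration.integrable_bound[OF hf_int(1)[of k q]])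
    show "(\<lambda>x. (hermite_fun k x)\<^sup>2 * (1 + \<bar>x\<bar>) powr a) \<in> borel_measurable lborel"
      by measurable
    show "AE x in lborel. norm ((hermite_fun k x)\<^sup>2 * (1 + \<bar>x\<bar>) powr a) \<le> norm ((hermite_fun k x)\<^sup>2 * poly q x)"
    proof (rule AE_I2)
      fix x :: real
      have "(1 + \<bar>x\<bar>) powr a \<le> (1 + \<bar>x\<bar>) powr (real n)"
        by (rule powr_mono[OF an]) simp
      also have "\<dots> = (1 + \<bar>x\<bar>) ^ n" by (simp add: powr_realpow)
      also have "\<dots> \<le> (2 + x\<^sup>2) ^ n"
      proof (rule power_mono)
        have "\<bar>x\<bar> \<le> 1 + x\<^sup>2"
        proof (cases "\<bar>x\<bar> \<le> 1")
          case True then show ?thesis by (simp add: add_increasing2)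
        next
          case False
          then have "\<bar>x\<bar> * 1 \<le> \<bar>x\<bar> * \<bar>x\<bar>" by (intro mult_left_mono) auto
          then show ?thesis by (simp add: power2_eq_square abs_mult_self)
        qed
        then show "1 + \<bar>x\<bar> \<le> 2 + x\<^sup>2" by simp
      qed simp
      finally have "(1 + \<bar>x\<bar>) powr a \<le> poly q x" unfolding pq .
      then show "norm ((hermite_fun k x)\<^sup>2 * (1 + \<bar>x\<bar>) powr a) \<le> norm ((hermite_fun k x)\<^sup>2 * poly q x)"
        by (simp add: abs_mult mult_left_mono)
    qed
  qed
qed


lemma k_split: "k \<ge> 2 \<Longrightarrow> \<exists>j. k = Suc (Suc j)"
  by (metis add_2_eq_Suc le_Suc_ex)

lemma M2k: "k \<ge> 2 \<Longrightarrow> (LINT x|lborel. (hermite_fun k x)\<^sup>2 * x ^ 2) = real k + 1/2"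
  using hf_M2 k_split by force

lemma M4k: "k \<ge> 2 \<Longrightarrow> (LINT x|lborel. (hermite_fun k x)\<^sup>2 * x ^ 4) = (6 * (real k)^2 + 6 * real k + 3) / 4"
proof -
  assume "k \<ge> 2"
  then obtain j where "k = Suc (Suc j)" using k_split by blast
  then show ?thesis using hf_M4[of j] by (simp add: add.commute)
qed

lemma bound1:
  assumes k: "k \<ge> 2" and al: "\<alpha> \<ge> 0"
  shows "real k powr (\<alpha> / 2) / (256 * 2 powr (\<alpha> / 2)) \<le> (LINT x|lborel. (hermite_fun k x)\<^sup>2 * (1 + \<bar>x\<bar>) powr \<alpha>)"
proof -
  define kk where "kk = real k"
  have kk: "kk \<ge> 2" unfolding kk_def using k by simp
  define a where "a = kk / 2"
  define b where "b = 8 * kk"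
  define c where "c = a powr (\<alpha> / 2) / b"
  have a0: "a > 0" "b > 0" "c \<ge> 0" unfolding a_def b_def c_def using kk by auto
  let ?h = "hermite_fun k"
  define r where "r = (\<lambda>x. c * ((?h x)\<^sup>2 * x ^ 2) - (c * a) * (?h x)\<^sup>2 - (c / b) * ((?h x)\<^sup>2 * x ^ 4))"
  have intr: "integrable lborel r" unfolding r_def using hf_mom(1)[of k 2] hf_mom(1)[of k 4] hf_int0[of k] by simp
  have Ir: "integral\<^sup>L lborel r = c * (kk + 1/2) - c * a - (c / b) * ((6 * kk^2 + 6 * kk + 3) / 4)"
  proof -
    have "integral\<^sup>L lborel r = c * (LINT x|lborel. (?h x)\<^sup>2 * x ^ 2) - (c * a) * (LINT x|lborel. (?h x)\<^sup>2)
       - (c / b) * (LINT x|lborel. (?h x)\<^sup>2 * x ^ 4)"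
      unfolding r_def using hf_mom(1)[of k 2] hf_mom(1)[of k 4] hf_int0[of k] by simp
    then show ?thesis by (simp only: M2k[OF k] M4k[OF k] hf_M0 kk_def mult_1_right)
  qed
  have "kk / 32 \<le> (kk + 1/2) - a - (1 / b) * ((6 * kk^2 + 6 * kk + 3) / 4)"
    unfolding a_def b_def using kk by (simp add: field_simps power2_eq_square) (smt (verit) mult_nonneg_nonneg)
  then have "c * (kk / 32) \<le> c * ((kk + 1/2) - a - (1 / b) * ((6 * kk^2 + 6 * kk + 3) / 4))"
    using a0 by (intro mult_left_mono) auto
  also have "\<dots> = integral\<^sup>L lborel r" unfolding Ir by (simp add: algebra_simps)
  also have "\<dots> \<le> (LINT x|lborel. (?h x)\<^sup>2 * (1 + \<bar>x\<bar>) powr \<alpha>)"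
  proof (rule integral_mono[OF intr int_pow])
    fix x :: real
    define H where "H = (?h x)\<^sup>2"
    define y where "y = x\<^sup>2"
    have H: "H \<ge> 0" unfolding H_def by simp
    have rx: "r x = (a powr (\<alpha> / 2) / b) * H * (y - a - y\<^sup>2 / b)"
      unfolding r_def c_def H_def y_def using a0 by (simp add: field_simps power2_eq_square eval_nat_numeral)
    show "r x \<le> (?h x)\<^sup>2 * (1 + \<bar>x\<bar>) powr \<alpha>"
    proof (cases "y \<ge> a")
      case True
      have "sqrt a \<le> sqrt (x\<^sup>2)" using True unfolding y_def by (rule real_sqrt_le_mono)
      then have "sqrt a \<le> \<bar>x\<bar>" by simp
      then have sq: "sqrt a \<le> 1 + \<bar>x\<bar>" by simp
      have "a powr (\<alpha> / 2) = (sqrt a) powr \<alpha>"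
        using a0 by (simp add: powr_half_sqrt[symmetric] powr_powr)
      also have "\<dots> \<le> (1 + \<bar>x\<bar>) powr \<alpha>" by (rule powr_mono2[OF al _ sq]) (use a0 in simp)
      finally have P: "a powr (\<alpha> / 2) \<le> (1 + \<bar>x\<bar>) powr \<alpha>" .
      have "0 \<le> (y - b / 2)\<^sup>2" by simp
      then have "y - y\<^sup>2 / b \<le> b / 4" using a0 by (simp add: field_simps power2_eq_square)
      then have Q: "y - a - y\<^sup>2 / b \<le> b" using a0 by linarith
      have "r x \<le> (a powr (\<alpha> / 2) / b) * H * b"
        unfolding rx using Q H a0 by (intro mult_left_mono) auto
      also have "\<dots> = a powr (\<alpha> / 2) * H" using a0 by simp
      also have "\<dots> \<le> (1 + \<bar>x\<bar>) powr \<alpha> * H" using P H by (rule mult_right_mono)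
      finally show ?thesis unfolding H_def by (simp add: mult.commute)
    next
      case False
      moreover have "y\<^sup>2 / b \<ge> 0" using a0 by simp
      ultimately have neg: "y - a - y\<^sup>2 / b \<le> 0" by linarith
      have nn: "a powr (\<alpha> / 2) / b * H \<ge> 0" using a0 H by simp
      have "r x \<le> 0" unfolding rx using nn neg by (rule mult_nonneg_nonpos)
      also have "0 \<le> (?h x)\<^sup>2 * (1 + \<bar>x\<bar>) powr \<alpha>" by simp
      finally show ?thesis .
    qed
  qed
  finally have "c * (kk / 32) \<le> (LINT x|lborel. (?h x)\<^sup>2 * (1 + \<bar>x\<bar>) powr \<alpha>)" .
  moreover have "c * (kk / 32) = real k powr (\<alpha> / 2) / (256 * 2 powr (\<alpha> / 2))"
    unfolding c_def a_def b_def kk_def using kk[unfolded kk_def] by (simp add: powr_divide field_simps)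
  ultimately show ?thesis by simp
qed


lemma bound2:
  assumes k: "k \<ge> 2" and al: "\<alpha> \<ge> 0"
  shows "3 powr (- \<alpha>) / 2 * real k powr (- \<alpha> / 2) \<le> (LINT x|lborel. (hermite_fun k x)\<^sup>2 * (1 + \<bar>x\<bar>) powr (- \<alpha>))"
proof -
  define kk where "kk = real k"
  have kk: "kk \<ge> 2" unfolding kk_def using k by simp
  define d where "d = (1 + sqrt (3 * kk)) powr (- \<alpha>)"
  have d0: "d \<ge> 0" unfolding d_def by simp
  let ?h = "hermite_fun k"
  define r where "r = (\<lambda>x. d * (?h x)\<^sup>2 - (d / (3 * kk)) * ((?h x)\<^sup>2 * x ^ 2))"
  have intr: "integrable lborel r" unfolding r_def using hf_mom(1)[of k 2] hf_int0[of k] by simp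
  have Ir: "integral\<^sup>L lborel r = d * 1 - (d / (3 * kk)) * (kk + 1/2)"
  proof -
    have "integral\<^sup>L lborel r = d * (LINT x|lborel. (?h x)\<^sup>2) - (d / (3 * kk)) * (LINT x|lborel. (?h x)\<^sup>2 * x ^ 2)"
      unfolding r_def using hf_mom(1)[of k 2] hf_int0[of k] by simp
    then show ?thesis by (simp only: M2k[OF k] hf_M0 kk_def)
  qed
  have "d / 2 \<le> d * 1 - (d / (3 * kk)) * (kk + 1/2)"
    using kk d0 mult_left_mono[of 1 kk d] by (simp add: field_simps)
  also have "\<dots> = integral\<^sup>L lborel r" unfolding Ir ..
  also have "\<dots> \<le> (LINT x|lborel. (?h x)\<^sup>2 * (1 + \<bar>x\<bar>) powr (- \<alpha>))"
  proof (rule integral_mono[OF intr int_pow])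
    fix x :: real
    define H where "H = (?h x)\<^sup>2"
    have H: "H \<ge> 0" unfolding H_def by simp
    have rx: "r x = d * H * (1 - x\<^sup>2 / (3 * kk))"
      unfolding r_def H_def using kk by (simp add: field_simps power2_eq_square)
    show "r x \<le> (?h x)\<^sup>2 * (1 + \<bar>x\<bar>) powr (- \<alpha>)"
    proof (cases "x\<^sup>2 \<le> 3 * kk")
      case True
      have "sqrt (x\<^sup>2) \<le> sqrt (3 * kk)" using True by (rule real_sqrt_le_mono)
      then have "1 + \<bar>x\<bar> \<le> 1 + sqrt (3 * kk)" by simp
      then have P: "d \<le> (1 + \<bar>x\<bar>) powr (- \<alpha>)" unfolding d_def
        by (intro powr_mono2'[OF _ _ \<open>1 + \<bar>x\<bar> \<le> 1 + sqrt (3 * kk)\<close>]) (use al in auto)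
      have "r x \<le> d * H * 1" unfolding rx using d0 H kk
        by (intro mult_left_mono) auto
      also have "\<dots> \<le> (1 + \<bar>x\<bar>) powr (- \<alpha>) * H" using P H by (simp add: mult_right_mono)
      finally show ?thesis unfolding H_def by (simp add: mult.commute)
    next
      case False
      then have neg: "1 - x\<^sup>2 / (3 * kk) \<le> 0" using kk by (simp add: field_simps)
      have nn: "d * H \<ge> 0" using d0 H by simp
      have "r x \<le> 0" unfolding rx using nn neg by (rule mult_nonneg_nonpos)
      also have "0 \<le> (?h x)\<^sup>2 * (1 + \<bar>x\<bar>) powr (- \<alpha>)" by simp
      finally show ?thesis .
    qed
  qed
  finally have main: "d / 2 \<le> (LINT x|lborel. (?h x)\<^sup>2 * (1 + \<bar>x\<bar>) powr (- \<alpha>))" .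
  have s1: "1 \<le> sqrt kk" using kk by simp
  have "sqrt (3 * kk) = sqrt 3 * sqrt kk" by (simp add: real_sqrt_mult)
  also have "\<dots> \<le> 2 * sqrt kk" using s1 by (intro mult_right_mono) (auto simp: real_sqrt_le_iff[of 3 4, simplified])
  finally have X: "sqrt (3 * kk) \<le> 2 * sqrt kk" .
  have "1 + sqrt (3 * kk) \<le> 3 * sqrt kk" using X s1 by linarith
  then have "(3 * sqrt kk) powr (- \<alpha>) \<le> d" unfolding d_def
    by (intro powr_mono2'[OF _ _ \<open>1 + sqrt (3 * kk) \<le> 3 * sqrt kk\<close>]) (use al kk in \<open>auto intro: add_pos_nonneg\<close>)
  moreover have "(3 * sqrt kk) powr (- \<alpha>) = 3 powr (- \<alpha>) * kk powr (- \<alpha> / 2)"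
    using kk by (simp add: powr_mult powr_half_sqrt[symmetric] powr_powr)
  ultimately have "3 powr (- \<alpha>) * kk powr (- \<alpha> / 2) / 2 \<le> d / 2" by simp
  with main show ?thesis unfolding kk_def by simp
qed


lemma bound3:
  assumes k: "k \<ge> 2" and al: "\<alpha> \<ge> 0"
  shows "2 powr (- \<alpha>) / 192 * real k powr (-1/2) \<le> (LINT x|lborel. (hermite_fun k x)\<^sup>2 * (1 + \<bar>x\<bar>) powr (- \<alpha>))"
proof -
  define kk where "kk = real k"
  have kk: "kk \<ge> 2" unfolding kk_def using k by simp
  let ?h = "hermite_fun k"
  define c where "c = 2 powr (- \<alpha>)"
  have c0: "c > 0" unfolding c_def by simp
  define A where "A = integral {0..1} (\<lambda>t. (?h t)\<^sup>2)"
  define f where "f = (\<lambda>x. indicator {0..1::real} x *\<^sub>R (c * (?h x)\<^sup>2))"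
  have sint: "set_integrable lborel {0..1::real} (\<lambda>x. c * (?h x)\<^sup>2)"
    unfolding set_integrable_def
    by (rule borel_integrable_compact) (auto intro!: continuous_intros hf_cont)
  have intf: "integrable lborel f" using sint unfolding set_integrable_def f_def .
  have "integral\<^sup>L lborel f = integral {0..1} (\<lambda>x. c * (?h x)\<^sup>2)"
    using set_borel_integral_eq_integral(2)[OF sint] unfolding set_lebesgue_integral_def f_def .
  also have "\<dots> = c * A" unfolding A_def
    by (rule integral_mult[symmetric]) (rule integrable_continuous_interval, intro continuous_intros hf_cont)
  finally have If: "integral\<^sup>L lborel f = c * A" .
  have "integral\<^sup>L lborel f \<le> (LINT x|lborel. (?h x)\<^sup>2 * (1 + \<bar>x\<bar>) powr (- \<alpha>))"
  proof (rule integral_mono[OF intf int_pow])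
    fix x :: real
    show "f x \<le> (?h x)\<^sup>2 * (1 + \<bar>x\<bar>) powr (- \<alpha>)"
    proof (cases "x \<in> {0..1}")
      case True
      then have "1 + \<bar>x\<bar> \<le> 2" by auto
      then have "c \<le> (1 + \<bar>x\<bar>) powr (- \<alpha>)" unfolding c_def
        by (intro powr_mono2'[OF _ _ \<open>1 + \<bar>x\<bar> \<le> 2\<close>]) (use al in \<open>auto intro: add_pos_nonneg\<close>)
      then have "c * (?h x)\<^sup>2 \<le> (1 + \<bar>x\<bar>) powr (- \<alpha>) * (?h x)\<^sup>2"
        by (rule mult_right_mono) simp
      then show ?thesis using True unfolding f_def by (simp add: mult.commute)
    next
      case False
      then show ?thesis unfolding f_def by simp
    qed
  qed
  then have main: "c * A \<le> (LINT x|lborel. (?h x)\<^sup>2 * (1 + \<bar>x\<bar>) powr (- \<alpha>))" using If by simp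
  define s where "s = sqrt kk"
  have s: "s > 0" unfolding s_def using kk by simp
  define S where "S = sqrt (2 * (2 * kk + 1))"
  have S0: "S > 0" unfolding S_def using kk by simp
  have "S \<le> sqrt (9 * kk)" unfolding S_def using kk by (intro real_sqrt_le_mono) simp
  also have "sqrt (9 * kk) = 3 * s" unfolding s_def by (simp add: real_sqrt_mult)
  finally have S3: "S \<le> 3 * s" .
  have q: "1/2 \<le> (2 * kk + 1) / (2 * kk + 2)" using kk by (simp add: field_simps)
  have "1 / (192 * s) = (1/2) * (1 / (96 * s))" by simp
  also have "\<dots> \<le> ((2 * kk + 1) / (2 * kk + 2)) * (1 / (96 * s))"
    using q s by (intro mult_right_mono) auto
  also have "\<dots> = (2 * kk + 1) / (32 * (2 * kk + 2) * (3 * s))" by simp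
  also have "\<dots> \<le> (2 * kk + 1) / (32 * (2 * kk + 2) * S)"
    using S3 S0 kk by (intro divide_left_mono mult_left_mono) auto
  also have "\<dots> = (2 * kk + 1) / (8 * S) / (4 * (2 * kk + 2))" by simp
  also have "\<dots> \<le> En k 0 / (4 * (2 * kk + 2))"
    using E0_lower[OF k] kk unfolding S_def kk_def by (intro divide_right_mono) auto
  also have "\<dots> \<le> A" unfolding A_def kk_def by (rule local_lower[OF k])
  finally have "1 / (192 * s) \<le> A" .
  then have cA: "c * (1 / (192 * s)) \<le> c * A" using c0 by (intro mult_left_mono) auto
  have pw: "kk powr (-1/2) = 1 / s" unfolding s_def using kk
    by (simp add: powr_minus_divide powr_half_sqrt)
  have "c / 192 * kk powr (-1/2) = c * (1 / (192 * s))" unfolding pw by simp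
  then have fin: "c / 192 * kk powr (-1/2) \<le> (LINT x|lborel. (?h x)\<^sup>2 * (1 + \<bar>x\<bar>) powr (- \<alpha>))"
    using cA main by linarith
  then show ?thesis unfolding c_def kk_def .
qed


theorem lemma4p9:
  fixes \<alpha> :: real
  assumes "\<alpha> \<ge> 0"
  shows "\<exists>C>0. \<forall>\<^sub>F k in sequentially.
           (LINT x|lborel. (hermite_fun k x)\<^sup>2 * (1 + \<bar>x\<bar>) powr \<alpha>) \<ge> C * real k powr (\<alpha> / 2)
         \<and> (LINT x|lborel. (hermite_fun k x)\<^sup>2 * (1 + \<bar>x\<bar>) powr (- \<alpha>))
             \<ge> C * max (real k powr (- \<alpha> / 2)) (real k powr (-1/2))"
proof -
  define C1 where "C1 = 1 / (256 * 2 powr (\<alpha> / 2))"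
  define C2 where "C2 = 3 powr (- \<alpha>) / 2"
  define C3 where "C3 = 2 powr (- \<alpha>) / 192"
  define C where "C = min C1 (min C2 C3)"
  have C0: "C > 0" unfolding C_def C1_def C2_def C3_def by simp
  have CC: "C \<le> C1" "C \<le> C2" "C \<le> C3" unfolding C_def by auto
  show ?thesis
  proof (intro exI[of _ C] conjI C0)
    show "\<forall>\<^sub>F k in sequentially.
           (LINT x|lborel. (hermite_fun k x)\<^sup>2 * (1 + \<bar>x\<bar>) powr \<alpha>) \<ge> C * real k powr (\<alpha> / 2)
         \<and> (LINT x|lborel. (hermite_fun k x)\<^sup>2 * (1 + \<bar>x\<bar>) powr (- \<alpha>))
             \<ge> C * max (real k powr (- \<alpha> / 2)) (real k powr (-1/2))"
    proof (rule eventually_sequentiallyI[of 2])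
      fix k :: nat assume k: "2 \<le> k"
      have b1: "real k powr (\<alpha> / 2) / (256 * 2 powr (\<alpha> / 2)) \<le> (LINT x|lborel. (hermite_fun k x)\<^sup>2 * (1 + \<bar>x\<bar>) powr \<alpha>)"
        by (rule bound1[OF k assms])
      have b2: "3 powr (- \<alpha>) / 2 * real k powr (- \<alpha> / 2) \<le> (LINT x|lborel. (hermite_fun k x)\<^sup>2 * (1 + \<bar>x\<bar>) powr (- \<alpha>))"
        by (rule bound2[OF k assms])
      have b3: "2 powr (- \<alpha>) / 192 * real k powr (-1/2) \<le> (LINT x|lborel. (hermite_fun k x)\<^sup>2 * (1 + \<bar>x\<bar>) powr (- \<alpha>))"
        by (rule bound3[OF k assms])
      have "C * real k powr (\<alpha> / 2) \<le> C1 * real k powr (\<alpha> / 2)"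
        using CC by (intro mult_right_mono) auto
      also have "\<dots> = real k powr (\<alpha> / 2) / (256 * 2 powr (\<alpha> / 2))" unfolding C1_def by simp
      finally have r1: "C * real k powr (\<alpha> / 2) \<le> (LINT x|lborel. (hermite_fun k x)\<^sup>2 * (1 + \<bar>x\<bar>) powr \<alpha>)"
        using b1 by linarith
      have u: "C * real k powr (- \<alpha> / 2) \<le> (LINT x|lborel. (hermite_fun k x)\<^sup>2 * (1 + \<bar>x\<bar>) powr (- \<alpha>))"
      proof -
        have "C * real k powr (- \<alpha> / 2) \<le> C2 * real k powr (- \<alpha> / 2)"
          using CC by (intro mult_right_mono) auto
        then show ?thesis using b2 unfolding C2_def by linarith
      qed
      have v: "C * real k powr (-1/2) \<le> (LINT x|lborel. (hermite_fun k x)\<^sup>2 * (1 + \<bar>x\<bar>) powr (- \<alpha>))"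
      proof -
        have "C * real k powr (-1/2) \<le> C3 * real k powr (-1/2)"
          using CC by (intro mult_right_mono) auto
        then show ?thesis using b3 unfolding C3_def by linarith
      qed
      have r2: "C * max (real k powr (- \<alpha> / 2)) (real k powr (-1/2)) \<le> (LINT x|lborel. (hermite_fun k x)\<^sup>2 * (1 + \<bar>x\<bar>) powr (- \<alpha>))"
        using u v by (cases "real k powr (- \<alpha> / 2) \<le> real k powr (-1/2)") (auto simp: max_def)
      show "(LINT x|lborel. (hermite_fun k x)\<^sup>2 * (1 + \<bar>x\<bar>) powr \<alpha>) \<ge> C * real k powr (\<alpha> / 2)
         \<and> (LINT x|lborel. (hermite_fun k x)\<^sup>2 * (1 + \<bar>x\<bar>) powr (- \<alpha>))
             \<ge> C * max (real k powr (- \<alpha> / 2)) (real k powr (-1/2))"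
        using r1 r2 by simp
    qed
  qed
qed


end
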